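(* Let $F:\mathbb{R}^2\to\mathbb{R}^2$ be a CPwL map with $F(E(t))=E(r(t))$ for all $t\in[0,1]$, let $\mathcal E(x,y)=(E(x),E(y))$ and $\mathcal F(z_1,z_2)=(F(z_1),F(z_2))$, and set $z_n(x,y)=\mathcal F^n(\mathcal E(x,y))$ for $(x,y)\in[0,1]^2$. Then there exist constants $C_0,C_1>0$, depending only on the piecewise-affine complexities of $E$ and $F$, such that $z_n$ (as a function on $[0,1]^2$) is the restriction of a network in $\Upsilon_{C_0,\,C_1n}(\mathrm{ReLU};2,4)$ for every $n\ge0$.
   Context: For integers $W,L,d,N\ge 1$, $\Upsilon_{W,L}(\mathrm{ReLU};d,N)$ denotes the set of functions $\mathbb{R}^d\to\mathbb{R}^N$ realized (exactly) by fully connected feed-forward ReLU networks of width $W$ and depth $L$. CPwL means continuous piecewise linear. $r:[0,1]\to[0,1]$ is $r(t)=2t-\lfloor 2t\rfloor$ for $t\in[0,1)$, $r(1)=1$. $E:[0,1]\to\mathbb{R}^2$ is $E(t)=(3t,3t)$ for $0\le t\le\frac13$, $E(t)=(1,2-3t)$ for $\frac13\le t\le\frac23$, $E(t)=(3-3t,0)$ for $\frac23\le t\le1$. *)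

theory Defs
  imports "HOL-Analysis.Analysis"
begin

text \<open>Vectors of R^k are represented as functions nat => real, only the
  indices below k being relevant.  A layer is a pair (A, b) of a weight
  matrix A (as nat => nat => real) and a bias b.\<close>

definition affine_map :: "nat \<Rightarrow> (nat \<Rightarrow> nat \<Rightarrow> real) \<Rightarrow> (nat \<Rightarrow> real) \<Rightarrow> (nat \<Rightarrow> real) \<Rightarrow> (nat \<Rightarrow> real)" where
  "affine_map m A b x = (\<lambda>i. (\<Sum>j<m. A i j * x j) + b i)"

definition relu_vec :: "(nat \<Rightarrow> real) \<Rightarrow> (nat \<Rightarrow> real)" where
  "relu_vec v = (\<lambda>i. max 0 (v i))"

fun hidden_eval :: "nat \<Rightarrow> nat \<Rightarrow> ((nat \<Rightarrow> nat \<Rightarrow> real) \<times> (nat \<Rightarrow> real)) list \<Rightarrow> (nat \<Rightarrow> real) \<Rightarrow> (nat \<Rightarrow> real)" where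
  "hidden_eval d W [] x = x"
| "hidden_eval d W ((A, b) # ls) x = hidden_eval W W ls (relu_vec (affine_map d A b x))"

definition relu_net :: "nat \<Rightarrow> nat \<Rightarrow> nat \<Rightarrow> ((nat \<Rightarrow> nat \<Rightarrow> real) \<times> (nat \<Rightarrow> real)) list
    \<Rightarrow> (nat \<Rightarrow> nat \<Rightarrow> real) \<Rightarrow> (nat \<Rightarrow> real) \<Rightarrow> (nat \<Rightarrow> real) \<Rightarrow> (nat \<Rightarrow> real)" where
  "relu_net d W N ls Aout bout x =
     (\<lambda>i. if i < N then affine_map (if ls = [] then d else W) Aout bout (hidden_eval d W ls x) i else 0)"

definition Upsilon :: "nat \<Rightarrow> nat \<Rightarrow> nat \<Rightarrow> nat \<Rightarrow> ((nat \<Rightarrow> real) \<Rightarrow> (nat \<Rightarrow> real)) set" where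
  "Upsilon W L d N = {g. \<exists>ls Aout bout. length ls = L \<and> g = relu_net d W N ls Aout bout}"

definition cpwl_pieces :: "('a::euclidean_space \<Rightarrow> 'b::euclidean_space) \<Rightarrow> nat \<Rightarrow> bool" where
  "cpwl_pieces f k \<longleftrightarrow> continuous_on UNIV f \<and>
     (\<exists>P. finite P \<and> card P \<le> k \<and> \<Union>P = UNIV \<and>
        (\<forall>S\<in>P. polyhedron S \<and> (\<exists>g c. linear g \<and> (\<forall>x\<in>S. f x = g x + c))))"

definition cpwl :: "('a::euclidean_space \<Rightarrow> 'b::euclidean_space) \<Rightarrow> bool" where
  "cpwl f \<longleftrightarrow> (\<exists>k. cpwl_pieces f k)"

definition r_map :: "real \<Rightarrow> real" where
  "r_map t = (if t = 1 then 1 else 2 * t - of_int \<lfloor>2 * t\<rfloor>)"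

definition E_map :: "real \<Rightarrow> real^2" where
  "E_map t = (if t \<le> 1/3 then vector [3 * t, 3 * t]
              else if t \<le> 2/3 then vector [1, 2 - 3 * t]
              else vector [3 - 3 * t, 0])"

definition z_n :: "(real^2 \<Rightarrow> real^2) \<Rightarrow> nat \<Rightarrow> real \<Rightarrow> real \<Rightarrow> (nat \<Rightarrow> real)" where
  "z_n F n x y = (\<lambda>i. if i = 0 then ((F ^^ n) (E_map x)) $ 1
                     else if i = 1 then ((F ^^ n) (E_map x)) $ 2
                     else if i = 2 then ((F ^^ n) (E_map y)) $ 1
                     else if i = 3 then ((F ^^ n) (E_map y)) $ 2
                     else 0)"

definition input2 :: "real \<Rightarrow> real \<Rightarrow> (nat \<Rightarrow> real)" where
  "input2 x y = (\<lambda>i. if i = 0 then x else if i = 1 then y else 0)"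

end

theory Submission
  imports Defs
begin


definition cc :: "real \<Rightarrow> real" where "cc t = \<bar>4*t-2\<bar> - 1"
definition sn :: "real \<Rightarrow> real" where "sn t = max (1 - 4*\<bar>t-1/4\<bar>) (4*t-4)"
definition Dm :: "real \<times> real \<Rightarrow> real \<times> real" where
  "Dm p = (\<bar>fst p\<bar> - \<bar>snd p\<bar>, \<bar>fst p + snd p\<bar> - \<bar>fst p - snd p\<bar>)"

lemma r_range: "t \<in> {0..1} \<Longrightarrow> r_map t \<in> {0..1}"
proof -
  assume t: "t \<in> {0..1}"
  show ?thesis
  proof (cases "t < 1/2")
    case True
    then have "\<lfloor>2*t\<rfloor> = 0" using t by (simp add: floor_eq_iff)
    then show ?thesis using t True by (simp add: r_map_def)
  next
    case False
    show ?thesis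
    proof (cases "t = 1")
      case True then show ?thesis by (simp add: r_map_def)
    next
      case F2: False
      then have "\<lfloor>2*t\<rfloor> = 1" using t False by (simp add: floor_eq_iff)
      then show ?thesis using t False F2 by (simp add: r_map_def)
    qed
  qed
qed

lemma P_q1: "0 \<le> t \<Longrightarrow> t \<le> 1/4 \<Longrightarrow> cc t = 1-4*t \<and> sn t = 4*t"
  by (auto simp: cc_def sn_def abs_if max_def)
lemma P_q2: "1/4 \<le> t \<Longrightarrow> t \<le> 1/2 \<Longrightarrow> cc t = 1-4*t \<and> sn t = 2-4*t"
  by (auto simp: cc_def sn_def abs_if max_def)
lemma P_q3: "1/2 \<le> t \<Longrightarrow> t \<le> 3/4 \<Longrightarrow> cc t = 4*t-3 \<and> sn t = 2-4*t"
  by (auto simp: cc_def sn_def abs_if max_def)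
lemma P_q4: "3/4 \<le> t \<Longrightarrow> t \<le> 1 \<Longrightarrow> cc t = 4*t-3 \<and> sn t = 4*t-4"
  by (auto simp: cc_def sn_def abs_if max_def)

lemma D_half: "0 \<le> t \<Longrightarrow> t \<le> 1/2 \<Longrightarrow> Dm (cc t, sn t) = (cc (2*t), sn (2*t))"
proof -
  assume a: "0 \<le> t" "t \<le> 1/2"
  consider "t \<le> 1/8" | "1/8 \<le> t \<and> t \<le> 1/4" | "1/4 \<le> t \<and> t \<le> 3/8" | "3/8 \<le> t" by linarith
  then show ?thesis
  proof cases
    case 1 then show ?thesis using a P_q1[of t] P_q1[of "2*t"] by (simp add: Dm_def)
  next
    case 2 then show ?thesis using a P_q1[of t] P_q2[of "2*t"] by (simp add: Dm_def)
  next
    case 3 then show ?thesis using a P_q2[of t] P_q3[of "2*t"] by (simp add: Dm_def)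
  next
    case 4 then show ?thesis using a P_q2[of t] P_q4[of "2*t"] by (simp add: Dm_def)
  qed
qed

lemma D_half2: "1/2 \<le> t \<Longrightarrow> t \<le> 1 \<Longrightarrow> Dm (cc t, sn t) = (cc (2*t-1), sn (2*t-1))"
proof -
  assume a: "1/2 \<le> t" "t \<le> 1"
  consider "t \<le> 5/8" | "5/8 \<le> t \<and> t \<le> 3/4" | "3/4 \<le> t \<and> t \<le> 7/8" | "7/8 \<le> t" by linarith
  then show ?thesis
  proof cases
    case 1 then show ?thesis using a P_q3[of t] P_q1[of "2*t-1"] by (simp add: Dm_def)
  next
    case 2 then show ?thesis using a P_q3[of t] P_q2[of "2*t-1"] by (simp add: Dm_def)
  next
    case 3 then show ?thesis using a P_q4[of t] P_q3[of "2*t-1"] by (simp add: Dm_def)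
  next
    case 4 then show ?thesis using a P_q4[of t] P_q4[of "2*t-1"] by (simp add: Dm_def)
  qed
qed

lemma D_P: "t \<in> {0..1} \<Longrightarrow> Dm (cc t, sn t) = (cc (r_map t), sn (r_map t))"
proof -
  assume t: "t \<in> {0..1}"
  show ?thesis
  proof (cases "t < 1/2")
    case True
    then have "\<lfloor>2*t\<rfloor> = 0" using t by (simp add: floor_eq_iff)
    then have "r_map t = 2*t" using True by (simp add: r_map_def)
    then show ?thesis using t True D_half by simp
  next
    case False
    show ?thesis
    proof (cases "t = 1")
      case True then show ?thesis using D_half2[of 1] by (simp add: r_map_def)
    next
      case F2: False
      then have "\<lfloor>2*t\<rfloor> = 1" using t False by (simp add: floor_eq_iff)
      then have "r_map t = 2*t - 1" using F2 by (simp add: r_map_def)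
      then show ?thesis using t False F2 D_half2 by simp
    qed
  qed
qed

lemma E_out1: "t \<in> {0..1} \<Longrightarrow> E_map t $ 1 = min 1 (3*(1 - cc t)/4)"
  using P_q1[of t] P_q2[of t] P_q3[of t] P_q4[of t]
  by (cases "t \<le> 1/4"; cases "t \<le> 1/2"; cases "t \<le> 3/4"; auto simp: E_map_def min_def)

lemma E_out2: "t \<in> {0..1} \<Longrightarrow> E_map t $ 2 =
   max 0 (min (min (3*(1 - cc t)/4) ((2 + 3 * sn t)/4)) (1 - cc t + sn t))"
  using P_q1[of t] P_q2[of t] P_q3[of t] P_q4[of t]
  by (cases "t \<le> 1/4"; cases "t \<le> 1/2"; cases "t \<le> 3/4"; auto simp: E_map_def min_def max_def)

lemma iter_F: assumes "\<forall>t\<in>{0..1}. F (E_map t) = E_map (r_map t)"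
  shows "t \<in> {0..1} \<Longrightarrow> (F ^^ n) (E_map t) = E_map ((r_map ^^ n) t) \<and> (r_map ^^ n) t \<in> {0..1}"
proof (induction n)
  case 0 then show ?case by simp
next
  case (Suc n) then show ?case using assms r_range by simp
qed

lemma iter_D: "t \<in> {0..1} \<Longrightarrow> (Dm ^^ n) (cc t, sn t) = (cc ((r_map ^^ n) t), sn ((r_map ^^ n) t)) \<and> (r_map ^^ n) t \<in> {0..1}"
proof (induction n)
  case 0 then show ?case by simp
next
  case (Suc n) then show ?case using D_P r_range by simp
qed



lemma sum8: "(\<Sum>j<8. f j) = f 0 + f 1 + f 2 + f 3 + f 4 + f 5 + f 6 + (f 7 :: real)" for f :: "nat \<Rightarrow> real"
  by (simp add: eval_nat_numeral)

definition vec :: "real list \<Rightarrow> nat \<Rightarrow> real" where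
  "vec xs j = (if j < length xs then xs ! j else 0)"
definition mat :: "real list list \<Rightarrow> nat \<Rightarrow> nat \<Rightarrow> real" where
  "mat M k j = vec (if k < length M then M ! k else []) j"

definition pack :: "(nat \<Rightarrow> real) \<Rightarrow> (nat \<Rightarrow> real) \<Rightarrow> nat \<Rightarrow> real" where
  "pack u v i = (if i < 8 then u i else if i < 16 then v (i - 8) else 0)"
definition bdiag :: "(nat \<Rightarrow> nat \<Rightarrow> real) \<Rightarrow> nat \<Rightarrow> nat \<Rightarrow> real" where
  "bdiag B i j = (if i < 8 \<and> j < 8 then B i j
     else if 8 \<le> i \<and> i < 16 \<and> 8 \<le> j \<and> j < 16 then B (i-8) (j-8) else 0)"
definition bbias :: "(nat \<Rightarrow> real) \<Rightarrow> nat \<Rightarrow> real" where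
  "bbias b i = (if i < 8 then b i else if i < 16 then b (i-8) else 0)"
definition fdiag :: "(nat \<Rightarrow> real) \<Rightarrow> nat \<Rightarrow> nat \<Rightarrow> real" where
  "fdiag w i j = (if i < 8 \<and> j = 0 then w i else if 8 \<le> i \<and> i < 16 \<and> j = 1 then w (i-8) else 0)"
definition lay :: "(nat \<Rightarrow> nat \<Rightarrow> real) \<Rightarrow> (nat \<Rightarrow> real) \<Rightarrow> (nat \<Rightarrow> real) \<Rightarrow> nat \<Rightarrow> real" where
  "lay B b u k = (if k < 8 then max 0 ((\<Sum>j<8. B k j * u j) + b k) else 0)"
definition lay0 :: "(nat \<Rightarrow> real) \<Rightarrow> (nat \<Rightarrow> real) \<Rightarrow> real \<Rightarrow> nat \<Rightarrow> real" where
  "lay0 w b x k = (if k < 8 then max 0 (w k * x + b k) else 0)"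

lemma split16: "(\<Sum>j<16. f j) = (\<Sum>j<8. f j) + (\<Sum>j<8. f (j + 8)) " for f :: "nat \<Rightarrow> real"
proof -
  have "{..<16::nat} = {..<8} \<union> {8..<16}" by auto
  then have "(\<Sum>j<16. f j) = (\<Sum>j<8. f j) + (\<Sum>j\<in>{8..<16}. f j)"
    by (simp add: sum.union_disjoint[symmetric] ivl_disj_int)
  also have "(\<Sum>j\<in>{8..<16}. f j) = (\<Sum>j<8. f (j + 8))"
    using sum.shift_bounds_nat_ivl[of f 0 8 8] by (simp add: lessThan_atLeast0)
  finally show ?thesis .
qed

lemma layer_pack:
  "relu_vec (affine_map 16 (bdiag B) (bbias b) (pack u v)) = pack (lay B b u) (lay B b v)"
proof
  fix i
  show "relu_vec (affine_map 16 (bdiag B) (bbias b) (pack u v)) i = pack (lay B b u) (lay B b v) i"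
  proof (cases "i < 8")
    case True
    then show ?thesis
      by (simp add: relu_vec_def affine_map_def split16 pack_def bdiag_def bbias_def lay_def)
  next
    case False
    show ?thesis
    proof (cases "i < 16")
      case True
      then show ?thesis using False
        by (simp add: relu_vec_def affine_map_def split16 pack_def bdiag_def bbias_def lay_def)
    next
      case F2: False
      then show ?thesis using False
        by (simp add: relu_vec_def affine_map_def split16 pack_def bdiag_def bbias_def lay_def)
    qed
  qed
qed

lemma first_pack:
  "relu_vec (affine_map 2 (fdiag w) (bbias b) (input2 x y)) = pack (lay0 w b x) (lay0 w b y)"
proof
  fix i
  show "relu_vec (affine_map 2 (fdiag w) (bbias b) (input2 x y)) i = pack (lay0 w b x) (lay0 w b y) i"
    by (simp add: relu_vec_def affine_map_def pack_def fdiag_def bbias_def lay0_def input2_def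
        eval_nat_numeral)
qed

lemma hidden_append: "hidden_eval W W (xs @ ys) h = hidden_eval W W ys (hidden_eval W W xs h)"
  by (induction xs arbitrary: h) auto

lemma hidden_rep: "hidden_eval 16 16 (replicate m (bdiag B, bbias b)) (pack u v)
   = pack ((lay B b ^^ m) u) ((lay B b ^^ m) v)"
  by (induction m arbitrary: u v) (simp_all add: layer_pack funpow_swap1)



definition alpha :: "nat \<Rightarrow> real" where "alpha = vec [1,-1,0,0,1,-1,1,-1]"
definition beta :: "nat \<Rightarrow> real" where "beta = vec [0,0,1,-1,1,-1,-1,1]"
definition featv :: "real \<Rightarrow> real \<Rightarrow> nat \<Rightarrow> real" where
  "featv c s k = (if k < 8 then max 0 (alpha k * c + beta k * s) else 0)"
definition featp :: "real \<times> real \<Rightarrow> nat \<Rightarrow> real" where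
  "featp p = featv (fst p) (snd p)"
definition stB :: "real list \<Rightarrow> real list \<Rightarrow> nat \<Rightarrow> nat \<Rightarrow> real" where
  "stB pc qc k j = alpha k * vec pc j + beta k * vec qc j"
definition stb :: "real \<Rightarrow> real \<Rightarrow> nat \<Rightarrow> real" where
  "stb p0 q0 k = alpha k * p0 + beta k * q0"
definition lin :: "real list \<Rightarrow> (nat \<Rightarrow> real) \<Rightarrow> real" where
  "lin pc u = (\<Sum>j<8. vec pc j * u j)"

lemma lay_state: "lay (stB pc qc) (stb p0 q0) u = featv (lin pc u + p0) (lin qc u + q0)"
proof
  fix k
  have "(\<Sum>j<8. stB pc qc k j * u j) = alpha k * lin pc u + beta k * lin qc u"
    by (simp add: stB_def lin_def sum.distrib sum_distrib_left algebra_simps)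
  then show "lay (stB pc qc) (stb p0 q0) u k = featv (lin pc u + p0) (lin qc u + q0) k"
    by (simp add: lay_def featv_def stb_def algebra_simps)
qed

lemma maxabs: "max 0 x + max 0 (-x) = \<bar>x\<bar>" for x :: real
  by (simp add: max_def abs_if)

definition DB where "DB = stB [1,1,-1,-1] [0,0,0,0,1,1,-1,-1]"
definition IB where "IB = stB [1,-1] [0,0,1,-1]"
definition zb where "zb = stb 0 0"

lemma lay_D: "lay DB zb (featp p) = featp (Dm p)"
proof -
  obtain c s where p: "p = (c,s)" by fastforce
  have "lin [1,1,-1,-1] (featv c s) = \<bar>c\<bar> - \<bar>s\<bar>"
    using maxabs[of c] maxabs[of s]
    by (simp add: lin_def sum8 vec_def featv_def alpha_def beta_def)
  moreover have "lin [0,0,0,0,1,1,-1,-1] (featv c s) = \<bar>c+s\<bar> - \<bar>c-s\<bar>"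
    using maxabs[of "c+s"] maxabs[of "c-s"]
    by (simp add: lin_def sum8 vec_def featv_def alpha_def beta_def algebra_simps)
  ultimately show ?thesis
    by (simp add: DB_def zb_def lay_state featp_def Dm_def p)
qed

lemma lay_I: "lay IB zb (featv c s) = featv c s"
proof -
  have "lin [1,-1] (featv c s) = c"
    by (simp add: lin_def sum8 vec_def featv_def alpha_def beta_def max_def)
  moreover have "lin [0,0,1,-1] (featv c s) = s"
    by (simp add: lin_def sum8 vec_def featv_def alpha_def beta_def max_def)
  ultimately show ?thesis
    by (simp add: IB_def zb_def lay_state)
qed

lemma iter_I: "(lay IB zb ^^ m) (featv c s) = featv c s"
  by (induction m) (simp_all add: lay_I)

lemma iter_Dl: "(lay DB zb ^^ m) (featp p) = featp ((Dm ^^ m) p)"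
  by (induction m) (simp_all add: lay_D)



definition w1 where "w1 = vec [4,-4,4,-4,1]"
definition b1 where "b1 = vec [-2,2,-1,1,0]"
definition B2 where "B2 = mat [[1],[0,1],[0,0,-1,-1,-4],[0,0,0,0,1]]"
definition b2 where "b2 = vec [0,0,5,0]"
definition B3 where "B3 = stB [1,1] [0,0,1,4]"
definition b3 where "b3 = stb (-1) (-4)"

lemma lay0_vals: "lay0 w1 b1 t 0 = max 0 (4*t-2)" "lay0 w1 b1 t 1 = max 0 (2-4*t)"
  "lay0 w1 b1 t 2 = max 0 (4*t-1)" "lay0 w1 b1 t 3 = max 0 (1-4*t)" "lay0 w1 b1 t 4 = max 0 t"
  by (simp_all add: lay0_def w1_def b1_def vec_def)

lemma lay2_vals: "lay B2 b2 u 0 = max 0 (u 0)" "lay B2 b2 u 1 = max 0 (u 1)"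
  "lay B2 b2 u 2 = max 0 (5 - u 2 - u 3 - 4 * u 4)" "lay B2 b2 u 3 = max 0 (u 4)"
  by (simp_all add: lay_def B2_def b2_def mat_def vec_def sum8 algebra_simps)

lemma init: assumes "t \<in> {0..1}"
  shows "lay B3 b3 (lay B2 b2 (lay0 w1 b1 t)) = featv (cc t) (sn t)"
proof -
  let ?u = "lay B2 b2 (lay0 w1 b1 t)"
  have l1: "lin [1,1] ?u - 1 = cc t"
    using assms by (simp add: lin_def sum8 vec_def lay2_vals lay2_vals[unfolded One_nat_def] lay0_vals lay0_vals[unfolded One_nat_def] cc_def abs_if max_def)
  have l2: "lin [0,0,1,4] ?u - 4 = sn t"
    using assms by (simp add: lin_def sum8 vec_def lay2_vals lay2_vals[unfolded One_nat_def] lay0_vals lay0_vals[unfolded One_nat_def] sn_def abs_if max_def)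
  show ?thesis using l1 l2 by (simp add: B3_def b3_def lay_state)
qed

definition O1 where "O1 = mat [[3/4,-3/4],[-3/4,3/4,-3/4,3/4],[1],[0,1],[0,0,1],[0,0,0,1]]"
definition ob1 where "ob1 = vec [1/4,1/4]"
definition O2 where "O2 = mat [[1],[0,-1,-3/4,3/4],[0,1,3/4,-3/4],[0,-1,1/4,-1/4,-1,1]]"
definition ob2 where "ob2 = vec [0,3/4,-3/4,-1/4]"
definition O3 where "O3 = mat [[1],[0,1,-1,-1]]"
definition ob3 where "ob3 = vec []"

lemma O1_vals: "lay O1 ob1 u 0 = max 0 (3/4 * u 0 - 3/4 * u 1 + 1/4)"
  "lay O1 ob1 u 1 = max 0 (- 3/4 * u 0 + 3/4 * u 1 - 3/4 * u 2 + 3/4 * u 3 + 1/4)"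
  "lay O1 ob1 u 2 = max 0 (u 0)" "lay O1 ob1 u 3 = max 0 (u 1)"
  "lay O1 ob1 u 4 = max 0 (u 2)" "lay O1 ob1 u 5 = max 0 (u 3)"
  by (simp_all add: lay_def O1_def ob1_def mat_def vec_def sum8 algebra_simps)

lemma O2_vals: "lay O2 ob2 u 0 = max 0 (u 0)"
  "lay O2 ob2 u 1 = max 0 (- u 1 - 3/4 * u 2 + 3/4 * u 3 + 3/4)"
  "lay O2 ob2 u 2 = max 0 (u 1 + 3/4 * u 2 - 3/4 * u 3 - 3/4)"
  "lay O2 ob2 u 3 = max 0 (- u 1 + 1/4 * u 2 - 1/4 * u 3 - u 4 + u 5 - 1/4)"
  by (simp_all add: lay_def O2_def ob2_def mat_def vec_def sum8 algebra_simps)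

lemma O3_vals: "lay O3 ob3 u 0 = max 0 (u 0)"
  "lay O3 ob3 u 1 = max 0 (u 1 - u 2 - u 3)"
  by (simp_all add: lay_def O3_def ob3_def mat_def vec_def sum8 algebra_simps)

lemma featv_vals: "featv c s 0 = max 0 c" "featv c s 1 = max 0 (-c)"
   "featv c s 2 = max 0 s" "featv c s 3 = max 0 (-s)"
  by (simp_all add: featv_def alpha_def beta_def vec_def)

lemma out_vals:
  shows "lay O3 ob3 (lay O2 ob2 (lay O1 ob1 (featv c s))) 0 = max 0 ((3*c+1)/4)"
    and "lay O3 ob3 (lay O2 ob2 (lay O1 ob1 (featv c s))) 1 =
         max 0 (min (min (3*(1 - c)/4) ((2 + 3 * s)/4)) (1 - c + s))"
proof -
  have mc: "max 0 c - max 0 (-c) = c" "max 0 s - max 0 (-s) = s" by (simp_all add: max_def)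
  show "lay O3 ob3 (lay O2 ob2 (lay O1 ob1 (featv c s))) 0 = max 0 ((3*c+1)/4)"
  proof -
    have e: "3/4 * max 0 c - 3/4 * max 0 (-c) + 1/4 = (3*c+1)/4" using mc by (simp add: algebra_simps)
    have e2: "max 0 (max 0 (x::real)) = max 0 x" for x by simp
    show ?thesis by (simp only: O3_vals O2_vals O1_vals featv_vals e e2)
  qed
  define u where "u = lay O1 ob1 (featv c s)"
  have u1: "u 1 = max 0 ((1 - 3*c - 3 * s)/4)"
  proof -
    have "- 3/4 * max 0 c + 3/4 * max 0 (-c) - 3/4 * max 0 s + 3/4 * max 0 (-s) + 1/4
          = (1 - 3*c - 3 * s)/4" using mc by (simp add: field_simps)
    then show ?thesis unfolding u_def O1_vals featv_vals by (simp only:)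
  qed
  have u23: "u 2 - u 3 = c" unfolding u_def O1_vals featv_vals using mc by simp
  have u45: "u 4 - u 5 = s" unfolding u_def O1_vals featv_vals using mc by simp
  define m where "m = 3/4 - 3/4*c - max 0 ((1 - 3*c - 3 * s)/4)"
  define q where "q = lay O2 ob2 u"
  have q1: "q 1 = max 0 m"
  proof -
    have "- u 1 - 3/4 * u 2 + 3/4 * u 3 + 3/4 = m" using u1 u23 unfolding m_def by (simp add: field_simps)
    then show ?thesis unfolding q_def O2_vals by (simp only:)
  qed
  have q2: "q 2 = max 0 (-m)"
  proof -
    have "u 1 + 3/4 * u 2 - 3/4 * u 3 - 3/4 = -m" using u1 u23 unfolding m_def by (simp add: field_simps)
    then show ?thesis unfolding q_def O2_vals by (simp only:)
  qed
  have q3: "q 3 = max 0 (m - (1 - c + s))"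
  proof -
    have "- u 1 + 1/4 * u 2 - 1/4 * u 3 - u 4 + u 5 - 1/4 = m - (1 - c + s)"
      using u1 u23 u45 unfolding m_def by (simp add: field_simps)
    then show ?thesis unfolding q_def O2_vals by (simp only:)
  qed
  have mm: "m = min (3*(1 - c)/4) ((2 + 3 * s)/4)"
    unfolding m_def by (simp add: max_def min_def field_simps)
  have fin: "max 0 (max 0 m - max 0 (-m) - max 0 (m - (1 - c + s))) = max 0 (min m (1 - c + s))"
    by (simp add: max_def min_def)
  show "lay O3 ob3 (lay O2 ob2 (lay O1 ob1 (featv c s))) 1 =
         max 0 (min (min (3*(1 - c)/4) ((2 + 3 * s)/4)) (1 - c + s))"
    using fin unfolding mm[symmetric] u_def[symmetric] q_def[symmetric] O3_vals q1 q2 q3 .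
qed



definition "L1 = (fdiag w1, bbias b1)"
definition "L2 = (bdiag B2, bbias b2)"
definition "L3 = (bdiag B3, bbias b3)"
definition "Il = (bdiag IB, bbias zb)"
definition "Dl = (bdiag DB, bbias zb)"
definition "Ol1 = (bdiag O1, bbias ob1)"
definition "Ol2 = (bdiag O2, bbias ob2)"
definition "Ol3 = (bdiag O3, bbias ob3)"
definition "lsn n = L1 # L2 # L3 # replicate (6*(n-1)) Il @ replicate n Dl @ [Ol1, Ol2, Ol3]"
definition Aout :: "nat \<Rightarrow> nat \<Rightarrow> real" where
  "Aout i j = (if i=0 \<and> j=0 then -1 else if i=1 \<and> j=1 then 1 else if i=2 \<and> j=8 then -1
     else if i=3 \<and> j=9 then 1 else 0)"
definition bout :: "nat \<Rightarrow> real" where "bout i = (if i = 0 \<or> i = 2 then 1 else 0)"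

definition outv :: "nat \<Rightarrow> real \<Rightarrow> nat \<Rightarrow> real" where
  "outv n t = lay O3 ob3 (lay O2 ob2 (lay O1 ob1 (featp ((Dm^^n) (cc t, sn t)))))"

lemma iter_Ip: "(lay IB zb ^^ m) (featp p) = featp p"
  using iter_I by (simp add: featp_def)

lemma len_lsn: "n \<ge> 1 \<Longrightarrow> length (lsn n) = 7 * n"
  by (simp add: lsn_def)

lemma hid: assumes "x \<in> {0..1}" "y \<in> {0..1}"
  shows "hidden_eval 2 16 (lsn n) (input2 x y) = pack (outv n x) (outv n y)"
proof -
  have "hidden_eval 2 16 (lsn n) (input2 x y) =
    hidden_eval 16 16 (replicate (6*(n-1)) Il @ replicate n Dl @ [Ol1, Ol2, Ol3])
      (pack (lay B3 b3 (lay B2 b2 (lay0 w1 b1 x))) (lay B3 b3 (lay B2 b2 (lay0 w1 b1 y))))"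
    by (simp add: lsn_def L1_def L2_def L3_def first_pack layer_pack)
  also have "\<dots> = hidden_eval 16 16 (replicate (6*(n-1)) Il @ replicate n Dl @ [Ol1, Ol2, Ol3])
      (pack (featv (cc x) (sn x)) (featv (cc y) (sn y)))"
    using init assms by simp
  also have "\<dots> = hidden_eval 16 16 [Ol1, Ol2, Ol3]
      (pack (featp ((Dm^^n) (cc x, sn x))) (featp ((Dm^^n) (cc y, sn y))))"
  proof -
    have "featv (cc x) (sn x) = featp (cc x, sn x)" "featv (cc y) (sn y) = featp (cc y, sn y)"
      by (simp_all add: featp_def)
    then show ?thesis
      by (simp only: hidden_append Il_def Dl_def hidden_rep iter_Ip iter_Dl)
  qed
  also have "\<dots> = pack (outv n x) (outv n y)"
    by (simp add: Ol1_def Ol2_def Ol3_def layer_pack outv_def)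
  finally show ?thesis .
qed

lemma outmap:
  "affine_map 16 Aout bout (pack U V) 0 = 1 - U 0"
  "affine_map 16 Aout bout (pack U V) 1 = U 1"
  "affine_map 16 Aout bout (pack U V) 2 = 1 - V 0"
  "affine_map 16 Aout bout (pack U V) 3 = V 1"
  by (simp_all add: affine_map_def split16 sum8 pack_def Aout_def bout_def)

lemma outv_vals: assumes "t \<in> {0..1}"
  shows "outv n t 0 = max 0 ((3 * cc ((r_map^^n) t) + 1)/4)"
    "outv n t 1 = max 0 (min (min (3*(1 - cc ((r_map^^n) t))/4) ((2 + 3 * sn ((r_map^^n) t))/4))
          (1 - cc ((r_map^^n) t) + sn ((r_map^^n) t)))"
  using iter_D[OF assms, of n] out_vals by (simp_all add: outv_def featp_def)

lemma zval: assumes "\<forall>t\<in>{0..1}. F (E_map t) = E_map (r_map t)" "t \<in> {0..1}"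
  shows "((F ^^ n) (E_map t)) $ 1 = 1 - outv n t 0"
        "((F ^^ n) (E_map t)) $ 2 = outv n t 1"
proof -
  have a: "(F ^^ n) (E_map t) = E_map ((r_map ^^ n) t)" "(r_map ^^ n) t \<in> {0..1}"
    using iter_F[OF assms(1) assms(2)] by auto
  show "((F ^^ n) (E_map t)) $ 1 = 1 - outv n t 0"
    unfolding a(1) E_out1[OF a(2)] outv_vals(1)[OF assms(2)] by (auto simp: max_def min_def field_simps)
  show "((F ^^ n) (E_map t)) $ 2 = outv n t 1"
    unfolding a(1) E_out2[OF a(2)] outv_vals(2)[OF assms(2)] ..
qed

theorem mainTheorem7:
  fixes k :: nat
  shows "\<exists>C0 C1 :: nat. C0 > 0 \<and> C1 > 0 \<and>
    (\<forall>F :: real^2 \<Rightarrow> real^2.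
       cpwl_pieces F k \<and> (\<forall>t\<in>{0..1}. F (E_map t) = E_map (r_map t)) \<longrightarrow>
       (\<forall>n::nat. n \<ge> 1 \<longrightarrow>
          (\<exists>g \<in> Upsilon C0 (C1 * n) 2 4.
             \<forall>x\<in>{0..1}. \<forall>y\<in>{0..1}. g (input2 x y) = z_n F n x y)))"
proof -
  have main: "\<exists>g \<in> Upsilon 16 (7 * n) 2 4. \<forall>x\<in>{0..1}. \<forall>y\<in>{0..1}. g (input2 x y) = z_n F n x y"
    if hF: "cpwl_pieces F k \<and> (\<forall>t\<in>{0..1}. F (E_map t) = E_map (r_map t))" and n: "n \<ge> 1"
    for F :: "real^2 \<Rightarrow> real^2" and n :: nat
  proof -
    from hF have hE: "\<forall>t\<in>{0..1}. F (E_map t) = E_map (r_map t)" by blast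
    let ?g = "relu_net 2 16 4 (lsn n) Aout bout"
    have gU: "?g \<in> Upsilon 16 (7 * n) 2 4"
      unfolding Upsilon_def using len_lsn[OF n] by blast
    have ne: "lsn n \<noteq> []" by (simp add: lsn_def)
    have "\<forall>x\<in>{0..1}. \<forall>y\<in>{0..1}. ?g (input2 x y) = z_n F n x y"
    proof (intro ballI)
      fix x y :: real assume x: "x \<in> {0..1}" and y: "y \<in> {0..1}"
      show "?g (input2 x y) = z_n F n x y"
      proof
        fix i
        have "(i::nat) < 4 \<Longrightarrow> i = 0 \<or> i = 1 \<or> i = 2 \<or> i = 3" by auto
        then show "?g (input2 x y) i = z_n F n x y i"
          unfolding relu_net_def using ne hid[OF x y, of n]
          by (auto simp: outmap outmap[unfolded One_nat_def] zval[OF hE x] zval[OF hE y] z_n_def)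
      qed
    qed
    then show "\<exists>g \<in> Upsilon 16 (7 * n) 2 4. \<forall>x\<in>{0..1}. \<forall>y\<in>{0..1}. g (input2 x y) = z_n F n x y"
      using gU by blast
  qed
  show ?thesis
    by (rule exI[of _ 16], rule exI[of _ 7]) (use main in auto)
qed

end
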